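(* For every $n\ge0$, the map $\preceq\mapsto M_\preceq$ is a bijection from the set of $\{\mathbf{3},\mathbf{2}+\mathbf{2}\}$-free naturally labelled posets on $[n]$ onto the set of upper-triangular $n\times n$ binary matrices $M$ that satisfy the following conditions. (i) $M(i,i)=1$ for all $i$. (ii) (no $M_0$) There are no $i<j<k$ with $M(i,j)=M(j,k)=1$. (iii) (no $M_1$) There are no $a<b<c<d$ with $M(a,b)=1$, $M(a,c)=0$, $M(a,d)=0$, $M(b,c)=0$, $M(b,d)=0$, $M(c,d)=1$. (iv) (no $M_2$) There are no $a<b<c<d$ with $M(a,b)=0$, $M(a,c)=1$, $M(a,d)=0$, $M(b,c)=0$, $M(b,d)=1$, $M(c,d)=0$. (v) (no $M_3$) There are no $a<b<c<d$ with $M(a,b)=0$, $M(a,c)=0$, $M(a,d)=1$, $M(b,c)=1$, $M(b,d)=0$, $M(c,d)=0$. In conditions (iii)–(v) the entry $M(a,a)$ is unrestricted. Conditions (ii)–(v) say that $M$ avoids the partial submatrices $M_0=\begin{pmatrix}1&\ast\\1&1\end{pmatrix}$ on rows $i<j$ and columns $j<k$, and $M_1=\begin{pmatrix}1&0&0\\1&0&0\\\ast&1&1\end{pmatrix}$, $M_2=\begin{pmatrix}0&1&0\\1&0&1\\\ast&1&0\end{pmatrix}$, $M_3=\begin{pmatrix}0&0&1\\1&1&0\\\ast&1&0\end{pmatrix}$ on rows $a<b<c$ and columns $b<c<d$, where $\ast$ marks an unconstrained entry. In each case the lower-left specified entries lie on the main diagonal.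
   Context: A partial order $\preceq$ on $[n]$ is naturally labelled if $x\prec y$ implies $x<y$. It is $\mathbf{3}$-free if there are no $x\prec y\prec z$. It is $(\mathbf{2}+\mathbf{2})$-free if there are no four distinct elements $i\prec j$, $k\prec \ell$ with each of $i,j$ incomparable to each of $k,\ell$. It is $\{\mathbf{3},\mathbf{2}+\mathbf{2}\}$-free if it is both. The incidence matrix $M_\preceq$ has $M_\preceq(i,j)=1$ if and only if $i\preceq j$. *)

theory Defs
  imports Main "Jordan_Normal_Form.Matrix"
begin

text \<open>A poset on [n] = {1..n} is a relation r with partial_order_on {1..n} r
  (reflexive on {1..n}, contained in {1..n} x {1..n}, transitive, antisymmetric).
  Pairs (x,y) in r mean x below-or-equal y.\<close>

definition naturally_labelled :: "nat rel \<Rightarrow> bool" where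
  "naturally_labelled r \<longleftrightarrow> (\<forall>x y. (x, y) \<in> r \<and> x \<noteq> y \<longrightarrow> x < y)"

definition strictly_below :: "nat rel \<Rightarrow> nat \<Rightarrow> nat \<Rightarrow> bool" where
  "strictly_below r x y \<longleftrightarrow> (x, y) \<in> r \<and> x \<noteq> y"

definition incomparable :: "nat rel \<Rightarrow> nat \<Rightarrow> nat \<Rightarrow> bool" where
  "incomparable r x y \<longleftrightarrow> (x, y) \<notin> r \<and> (y, x) \<notin> r"

definition three_free :: "nat rel \<Rightarrow> bool" where
  "three_free r \<longleftrightarrow> \<not> (\<exists>x y z. strictly_below r x y \<and> strictly_below r y z)"

definition two_plus_two_free :: "nat rel \<Rightarrow> bool" where
  "two_plus_two_free r \<longleftrightarrow> \<not> (\<exists>i j k l. distinct [i, j, k, l] \<and>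
      strictly_below r i j \<and> strictly_below r k l \<and>
      incomparable r i k \<and> incomparable r i l \<and>
      incomparable r j k \<and> incomparable r j l)"

definition nl_32_free_posets :: "nat \<Rightarrow> nat rel set" where
  "nl_32_free_posets n = {r. partial_order_on {1..n} r \<and> naturally_labelled r \<and>
      three_free r \<and> two_plus_two_free r}"

text \<open>Incidence matrix: entry (i,j) (0-based, i,j < n) corresponds to the
  elements i+1, j+1 of [n]; it is 1 iff i+1 is below-or-equal j+1.\<close>

definition incidence_matrix :: "nat \<Rightarrow> nat rel \<Rightarrow> nat mat" where
  "incidence_matrix n r = mat n n (\<lambda>(i, j). if (i + 1, j + 1) \<in> r then 1 else 0)"

definition good_matrices :: "nat \<Rightarrow> nat mat set" where
  "good_matrices n = {M. M \<in> carrier_mat n n \<and>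
      (\<forall>i<n. \<forall>j<n. M $$ (i, j) \<in> {0, 1}) \<and>
      upper_triangular M \<and>
      (\<forall>i<n. M $$ (i, i) = 1) \<and>
      \<not> (\<exists>i j k. i < j \<and> j < k \<and> k < n \<and> M $$ (i, j) = 1 \<and> M $$ (j, k) = 1) \<and>
      \<not> (\<exists>a b c d. a < b \<and> b < c \<and> c < d \<and> d < n \<and>
          M $$ (a, b) = 1 \<and> M $$ (a, c) = 0 \<and> M $$ (a, d) = 0 \<and>
          M $$ (b, c) = 0 \<and> M $$ (b, d) = 0 \<and> M $$ (c, d) = 1) \<and>
      \<not> (\<exists>a b c d. a < b \<and> b < c \<and> c < d \<and> d < n \<and>
          M $$ (a, b) = 0 \<and> M $$ (a, c) = 1 \<and> M $$ (a, d) = 0 \<and>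
          M $$ (b, c) = 0 \<and> M $$ (b, d) = 1 \<and> M $$ (c, d) = 0) \<and>
      \<not> (\<exists>a b c d. a < b \<and> b < c \<and> c < d \<and> d < n \<and>
          M $$ (a, b) = 0 \<and> M $$ (a, c) = 0 \<and> M $$ (a, d) = 1 \<and>
          M $$ (b, c) = 1 \<and> M $$ (b, d) = 0 \<and> M $$ (c, d) = 0)}"

end

theory Submission
  imports Defs
begin

lemma im_entry: "i < n \<Longrightarrow> j < n \<Longrightarrow> incidence_matrix n r $$ (i,j) = (if (i+1,j+1) \<in> r then 1 else 0)"
  by (simp add: incidence_matrix_def)

lemma rel_from_mat:
  assumes "r \<subseteq> {1..n} \<times> {1..n}"
  shows "r = {(i+1, j+1) | i j. i < n \<and> j < n \<and> incidence_matrix n r $$ (i,j) = 1}"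
proof (rule Set.set_eqI)
  fix p show "p \<in> r \<longleftrightarrow> p \<in> {(i+1, j+1) | i j. i < n \<and> j < n \<and> incidence_matrix n r $$ (i,j) = 1}"
  proof (rule iffI)
    assume p: "p \<in> r"
    obtain x y where xy: "p = (x,y)" by force
    with p assms have "x \<ge> 1" "x \<le> n" "y \<ge> 1" "y \<le> n" by auto
    then show "p \<in> {(i+1, j+1) | i j. i < n \<and> j < n \<and> incidence_matrix n r $$ (i,j) = 1}"
      using p xy by (intro CollectI exI[of _ "x-1"] exI[of _ "y-1"]) (auto simp: im_entry)
  next
    assume "p \<in> {(i+1, j+1) | i j. i < n \<and> j < n \<and> incidence_matrix n r $$ (i,j) = 1}"
    then show "p \<in> r" by (auto simp: im_entry split: if_splits)
  qed
qed

lemma inj: "inj_on (incidence_matrix n) (nl_32_free_posets n)"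
proof (rule inj_onI)
  fix r s assume r: "r \<in> nl_32_free_posets n" and s: "s \<in> nl_32_free_posets n"
    and e: "incidence_matrix n r = incidence_matrix n s"
  have "r \<subseteq> {1..n} \<times> {1..n}" "s \<subseteq> {1..n} \<times> {1..n}"
    using r s by (auto simp: nl_32_free_posets_def partial_order_on_def preorder_on_def)
  then have hr: "r \<subseteq> {1..n} \<times> {1..n}" and hs: "s \<subseteq> {1..n} \<times> {1..n}" by auto
  define F where "F = (\<lambda>M :: nat mat. {(i+1, j+1) | i j. i < n \<and> j < n \<and> M $$ (i,j) = 1})"
  have 1: "r = F (incidence_matrix n r)" unfolding F_def by (rule rel_from_mat[OF hr])
  have 2: "s = F (incidence_matrix n s)" unfolding F_def by (rule rel_from_mat[OF hs])
  show "r = s" using 1 2 e by (metis (no_types))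
qed

lemma image_sub:
  assumes r: "r \<in> nl_32_free_posets n"
  shows "incidence_matrix n r \<in> good_matrices n"
proof -
  have po: "r \<subseteq> {1..n} \<times> {1..n}" "refl_on {1..n} r" "trans r" "antisym r"
    and nl: "naturally_labelled r" and tf: "three_free r" and tt: "two_plus_two_free r"
    using r by (auto simp: nl_32_free_posets_def partial_order_on_def preorder_on_def)
  let ?M = "incidence_matrix n r"
  have E: "\<And>i j. i < n \<Longrightarrow> j < n \<Longrightarrow> ?M $$ (i,j) = 1 \<longleftrightarrow> (i+1,j+1) \<in> r"
    and Z: "\<And>i j. i < n \<Longrightarrow> j < n \<Longrightarrow> ?M $$ (i,j) = 0 \<longleftrightarrow> (i+1,j+1) \<notin> r"
    by (auto simp: im_entry)
  have NL: "\<And>x y. (x,y) \<in> r \<Longrightarrow> x \<noteq> y \<Longrightarrow> x < y" using nl by (auto simp: naturally_labelled_def)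
  have car: "?M \<in> carrier_mat n n" by (simp add: incidence_matrix_def)
  have bin: "\<forall>i<n. \<forall>j<n. ?M $$ (i, j) \<in> {0, 1}" by (simp add: im_entry)
  have ut: "upper_triangular ?M"
    unfolding upper_triangular_def
  proof (intro allI impI)
    fix i j assume i: "i < dim_row ?M" and j: "j < i"
    then have "i < n" "j < n" using car by auto
    moreover have "(i+1,j+1) \<notin> r" using NL[of "i+1" "j+1"] j by auto
    ultimately show "?M $$ (i,j) = 0" by (simp add: im_entry)
  qed
  have dg: "\<forall>i<n. ?M $$ (i, i) = 1" using po(2) by (auto simp: im_entry refl_on_def)
  have m0: "\<not> (\<exists>i j k. i < j \<and> j < k \<and> k < n \<and> ?M $$ (i, j) = 1 \<and> ?M $$ (j, k) = 1)"
  proof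
    assume "\<exists>i j k. i < j \<and> j < k \<and> k < n \<and> ?M $$ (i, j) = 1 \<and> ?M $$ (j, k) = 1"
    then obtain i j k where h: "i < j" "j < k" "k < n" "?M $$ (i,j) = 1" "?M $$ (j,k) = 1"
      by blast
    then have "(i+1,j+1) \<in> r" "(j+1,k+1) \<in> r" using E[of i j] E[of j k] by auto
    then have "strictly_below r (i+1) (j+1)" "strictly_below r (j+1) (k+1)"
      using h unfolding strictly_below_def by auto
    then show False using tf unfolding three_free_def by blast
  qed
  have INC: "\<And>x y. x < y \<Longrightarrow> y < n \<Longrightarrow> ?M $$ (x,y) = 0 \<Longrightarrow> incomparable r (x+1) (y+1) \<and> incomparable r (y+1) (x+1)"
  proof -
    fix x y assume "x < y" "y < n" "?M $$ (x,y) = 0"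
    then have "(x+1,y+1) \<notin> r" "(y+1,x+1) \<notin> r" using Z[of x y] NL[of "y+1" "x+1"] by auto
    then show "incomparable r (x+1) (y+1) \<and> incomparable r (y+1) (x+1)"
      unfolding incomparable_def by auto
  qed
  have SB: "\<And>x y. x < y \<Longrightarrow> y < n \<Longrightarrow> ?M $$ (x,y) = 1 \<Longrightarrow> strictly_below r (x+1) (y+1)"
  proof -
    fix x y assume "x < y" "y < n" "?M $$ (x,y) = 1"
    then show "strictly_below r (x+1) (y+1)" using E[of x y] unfolding strictly_below_def by auto
  qed
  have TT: "\<And>i j k l. distinct [i, j, k, l] \<Longrightarrow>
      strictly_below r i j \<Longrightarrow> strictly_below r k l \<Longrightarrow>
      incomparable r i k \<Longrightarrow> incomparable r i l \<Longrightarrow>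
      incomparable r j k \<Longrightarrow> incomparable r j l \<Longrightarrow> False"
    using tt unfolding two_plus_two_free_def by blast
  have m1: "\<not> (\<exists>a b c d. a < b \<and> b < c \<and> c < d \<and> d < n \<and>
          ?M $$ (a, b) = 1 \<and> ?M $$ (a, c) = 0 \<and> ?M $$ (a, d) = 0 \<and>
          ?M $$ (b, c) = 0 \<and> ?M $$ (b, d) = 0 \<and> ?M $$ (c, d) = 1)"
  proof
    assume "\<exists>a b c d. a < b \<and> b < c \<and> c < d \<and> d < n \<and>
          ?M $$ (a, b) = 1 \<and> ?M $$ (a, c) = 0 \<and> ?M $$ (a, d) = 0 \<and>
          ?M $$ (b, c) = 0 \<and> ?M $$ (b, d) = 0 \<and> ?M $$ (c, d) = 1"
    then obtain a b c d where h: "a < b" "b < c" "c < d" "d < n"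
          "?M $$ (a, b) = 1" "?M $$ (a, c) = 0" "?M $$ (a, d) = 0"
          "?M $$ (b, c) = 0" "?M $$ (b, d) = 0" "?M $$ (c, d) = 1" by blast
    show False
    proof (rule TT[of "a+1" "b+1" "c+1" "d+1"])
      show "distinct [a + 1, b + 1, c + 1, d + 1]" using h(1-3) by auto
      show "strictly_below r (a + 1) (b + 1)" using SB h by auto
      show "strictly_below r (c + 1) (d + 1)" using SB h by auto
      show "incomparable r (a + 1) (c + 1)" using INC[of a c] h by auto
      show "incomparable r (a + 1) (d + 1)" using INC[of a d] h by auto
      show "incomparable r (b + 1) (c + 1)" using INC[of b c] h by auto
      show "incomparable r (b + 1) (d + 1)" using INC[of b d] h by auto
    qed
  qed
  have m2: "\<not> (\<exists>a b c d. a < b \<and> b < c \<and> c < d \<and> d < n \<and>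
          ?M $$ (a, b) = 0 \<and> ?M $$ (a, c) = 1 \<and> ?M $$ (a, d) = 0 \<and>
          ?M $$ (b, c) = 0 \<and> ?M $$ (b, d) = 1 \<and> ?M $$ (c, d) = 0)"
  proof
    assume "\<exists>a b c d. a < b \<and> b < c \<and> c < d \<and> d < n \<and>
          ?M $$ (a, b) = 0 \<and> ?M $$ (a, c) = 1 \<and> ?M $$ (a, d) = 0 \<and>
          ?M $$ (b, c) = 0 \<and> ?M $$ (b, d) = 1 \<and> ?M $$ (c, d) = 0"
    then obtain a b c d where h: "a < b" "b < c" "c < d" "d < n"
          "?M $$ (a, b) = 0" "?M $$ (a, c) = 1" "?M $$ (a, d) = 0"
          "?M $$ (b, c) = 0" "?M $$ (b, d) = 1" "?M $$ (c, d) = 0" by blast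
    show False
    proof (rule TT[of "a+1" "c+1" "b+1" "d+1"])
      show "distinct [a + 1, c + 1, b + 1, d + 1]" using h(1-3) by auto
      show "strictly_below r (a + 1) (c + 1)" using SB h by auto
      show "strictly_below r (b + 1) (d + 1)" using SB h by auto
      show "incomparable r (a + 1) (b + 1)" using INC[of a b] h by auto
      show "incomparable r (a + 1) (d + 1)" using INC[of a d] h by auto
      show "incomparable r (c + 1) (b + 1)" using INC[of b c] h by auto
      show "incomparable r (c + 1) (d + 1)" using INC[of c d] h by auto
    qed
  qed
  have m3: "\<not> (\<exists>a b c d. a < b \<and> b < c \<and> c < d \<and> d < n \<and>
          ?M $$ (a, b) = 0 \<and> ?M $$ (a, c) = 0 \<and> ?M $$ (a, d) = 1 \<and>
          ?M $$ (b, c) = 1 \<and> ?M $$ (b, d) = 0 \<and> ?M $$ (c, d) = 0)"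
  proof
    assume "\<exists>a b c d. a < b \<and> b < c \<and> c < d \<and> d < n \<and>
          ?M $$ (a, b) = 0 \<and> ?M $$ (a, c) = 0 \<and> ?M $$ (a, d) = 1 \<and>
          ?M $$ (b, c) = 1 \<and> ?M $$ (b, d) = 0 \<and> ?M $$ (c, d) = 0"
    then obtain a b c d where h: "a < b" "b < c" "c < d" "d < n"
          "?M $$ (a, b) = 0" "?M $$ (a, c) = 0" "?M $$ (a, d) = 1"
          "?M $$ (b, c) = 1" "?M $$ (b, d) = 0" "?M $$ (c, d) = 0" by blast
    show False
    proof (rule TT[of "a+1" "d+1" "b+1" "c+1"])
      show "distinct [a + 1, d + 1, b + 1, c + 1]" using h(1-3) by auto
      show "strictly_below r (a + 1) (d + 1)" using SB h by auto
      show "strictly_below r (b + 1) (c + 1)" using SB h by auto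
      show "incomparable r (a + 1) (b + 1)" using INC[of a b] h by auto
      show "incomparable r (a + 1) (c + 1)" using INC[of a c] h by auto
      show "incomparable r (d + 1) (b + 1)" using INC[of b d] h by auto
      show "incomparable r (d + 1) (c + 1)" using INC[of c d] h by auto
    qed
  qed
  show ?thesis unfolding good_matrices_def
    by (rule CollectI, intro conjI car bin ut dg m0 m1 m2 m3)
qed

lemma two_two_aux:
  fixes M :: "nat mat"
  assumes
   m1: "\<And>a b c d. a < b \<Longrightarrow> b < c \<Longrightarrow> c < d \<Longrightarrow> d < n \<Longrightarrow>
          M $$ (a, b) = 1 \<Longrightarrow> M $$ (a, c) = 0 \<Longrightarrow> M $$ (a, d) = 0 \<Longrightarrow>
          M $$ (b, c) = 0 \<Longrightarrow> M $$ (b, d) = 0 \<Longrightarrow> M $$ (c, d) = 1 \<Longrightarrow> False" and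
   m2: "\<And>a b c d. a < b \<Longrightarrow> b < c \<Longrightarrow> c < d \<Longrightarrow> d < n \<Longrightarrow>
          M $$ (a, b) = 0 \<Longrightarrow> M $$ (a, c) = 1 \<Longrightarrow> M $$ (a, d) = 0 \<Longrightarrow>
          M $$ (b, c) = 0 \<Longrightarrow> M $$ (b, d) = 1 \<Longrightarrow> M $$ (c, d) = 0 \<Longrightarrow> False" and
   m3: "\<And>a b c d. a < b \<Longrightarrow> b < c \<Longrightarrow> c < d \<Longrightarrow> d < n \<Longrightarrow>
          M $$ (a, b) = 0 \<Longrightarrow> M $$ (a, c) = 0 \<Longrightarrow> M $$ (a, d) = 1 \<Longrightarrow>
          M $$ (b, c) = 1 \<Longrightarrow> M $$ (b, d) = 0 \<Longrightarrow> M $$ (c, d) = 0 \<Longrightarrow> False"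
  and o: "a < b" "c < d" "b < n" "d < n" and dist: "distinct [a,b,c,d]"
  and v: "M $$ (a,b) = 1" "M $$ (c,d) = 1"
  and z: "M $$ (a,c) = 0" "M $$ (c,a) = 0" "M $$ (a,d) = 0" "M $$ (d,a) = 0"
  and z2: "M $$ (b,c) = 0" "M $$ (c,b) = 0" "M $$ (b,d) = 0" "M $$ (d,b) = 0"
  shows False
proof (cases "a < c")
  case True
  show False
  proof (cases "b < c")
    case True show False by (rule m1[of a b c d]) (use o v z z2 True in simp_all)
  next
    case False
    then have "c < b" using dist by auto
    show False
    proof (cases "b < d")
      case True show False by (rule m2[of a c b d]) (use o v z z2 True \<open>a<c\<close> \<open>c<b\<close> in simp_all)
    next
      case False then have "d < b" using dist by auto
      show False by (rule m3[of a c d b]) (use o v z z2 \<open>d<b\<close> \<open>a<c\<close> \<open>c<b\<close> in simp_all)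
    qed
  qed
next
  case False
  then have "c < a" using dist by auto
  show False
  proof (cases "d < a")
    case True show False by (rule m1[of c d a b]) (use o v z z2 True in simp_all)
  next
    case False
    then have "a < d" using dist by auto
    show False
    proof (cases "d < b")
      case True show False by (rule m2[of c a d b]) (use o v z z2 True \<open>c<a\<close> \<open>a<d\<close> in simp_all)
    next
      case False then have "b < d" using dist by auto
      show False by (rule m3[of c a b d]) (use o v z z2 \<open>b<d\<close> \<open>c<a\<close> \<open>a<d\<close> in simp_all)
    qed
  qed
qed

lemma surj:
  assumes M: "M \<in> good_matrices n"
  shows "M \<in> incidence_matrix n ` nl_32_free_posets n"
proof -
  define r where "r = {(i+1, j+1) | i j. i < n \<and> j < n \<and> M $$ (i,j) = 1}"
  note G = M[unfolded good_matrices_def mem_Collect_eq]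
  note car = G[THEN conjunct1]
  note bin = G[THEN conjunct2, THEN conjunct1]
  note ut = G[THEN conjunct2, THEN conjunct2, THEN conjunct1]
  note dg = G[THEN conjunct2, THEN conjunct2, THEN conjunct2, THEN conjunct1]
  note m0 = G[THEN conjunct2, THEN conjunct2, THEN conjunct2, THEN conjunct2, THEN conjunct1]
  note m1 = G[THEN conjunct2, THEN conjunct2, THEN conjunct2, THEN conjunct2, THEN conjunct2, THEN conjunct1]
  note m2 = G[THEN conjunct2, THEN conjunct2, THEN conjunct2, THEN conjunct2, THEN conjunct2, THEN conjunct2, THEN conjunct1]
  note m3 = G[THEN conjunct2, THEN conjunct2, THEN conjunct2, THEN conjunct2, THEN conjunct2, THEN conjunct2, THEN conjunct2]
  have R: "\<And>i j. i < n \<Longrightarrow> j < n \<Longrightarrow> (i+1, j+1) \<in> r \<longleftrightarrow> M $$ (i,j) = 1"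
    unfolding r_def by auto
  have Rs: "r \<subseteq> {1..n} \<times> {1..n}" unfolding r_def by auto
  have Rx: "\<And>x y. (x,y) \<in> r \<Longrightarrow> \<exists>i j. x = i+1 \<and> y = j+1 \<and> i < n \<and> j < n \<and> M $$ (i,j) = 1"
    unfolding r_def by auto
  have Z: "\<And>i j. i < n \<Longrightarrow> j < n \<Longrightarrow> M $$ (i,j) \<noteq> 1 \<Longrightarrow> M $$ (i,j) = 0"
    using bin by auto
  have UT: "\<And>i j. i < n \<Longrightarrow> j < i \<Longrightarrow> M $$ (i,j) = 0"
    using ut car unfolding upper_triangular_def by auto
  have NLi: "\<And>i j. i < n \<Longrightarrow> j < n \<Longrightarrow> M $$ (i,j) = 1 \<Longrightarrow> i \<noteq> j \<Longrightarrow> i < j"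
    using UT by (metis linorder_neqE_nat zero_neq_one)
  have nl: "naturally_labelled r"
    unfolding naturally_labelled_def
  proof (intro allI impI)
    fix x y assume a: "(x, y) \<in> r \<and> x \<noteq> y"
    then obtain i j where "x = i+1" "y = j+1" "i < n" "j < n" "M $$ (i,j) = 1" using Rx by blast
    then show "x < y" using NLi[of i j] a by auto
  qed
  have refl: "refl_on {1..n} r"
    unfolding refl_on_def
  proof
    fix x assume "x \<in> {1..n}"
    then have i: "x = (x-1)+1" "x - 1 < n" by auto
    have "M $$ (x-1, x-1) = 1" using dg i(2) by blast
    then have "((x-1)+1, (x-1)+1) \<in> r" using R[of "x-1" "x-1"] i(2) by blast
    then show "(x,x) \<in> r" using i(1) by simp
  qed
  have trans: "trans r"
  proof (rule transI)
    fix x y z assume a: "(x,y) \<in> r" "(y,z) \<in> r"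
    show "(x,z) \<in> r"
    proof (cases "x = y \<or> y = z")
      case True then show ?thesis using a by auto
    next
      case False
      from Rx[OF a(1)] obtain i j where ij: "x = i+1" "y = j+1" "i<n" "j<n" "M $$ (i,j) = 1" by blast
      from Rx[OF a(2)] obtain j' k where jk: "y = j'+1" "z = k+1" "j'<n" "k<n" "M $$ (j',k) = 1" by blast
      have "j' = j" using ij jk by simp
      have "i < j" using NLi[of i j] ij False by auto
      moreover have "j < k" using NLi[of j k] jk \<open>j' = j\<close> False by auto
      ultimately have "\<exists>i j k. i < j \<and> j < k \<and> k < n \<and> M $$ (i, j) = 1 \<and> M $$ (j, k) = 1"
        using ij jk \<open>j' = j\<close> by blast
      with m0 show ?thesis by (rule notE)
    qed
  qed
  have antisym: "antisym r"
  proof (rule antisymI)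
    fix x y assume a: "(x,y) \<in> r" "(y,x) \<in> r"
    show "x = y"
    proof (rule ccontr)
      assume ne: "x \<noteq> y"
      have "x < y" using nl a(1) ne unfolding naturally_labelled_def by blast
      moreover have "y < x" using nl a(2) ne unfolding naturally_labelled_def by blast
      ultimately show False by simp
    qed
  qed
  have tf: "three_free r"
    unfolding three_free_def strictly_below_def
  proof
    assume "\<exists>x y z. ((x, y) \<in> r \<and> x \<noteq> y) \<and> (y, z) \<in> r \<and> y \<noteq> z"
    then obtain x y z where a: "(x, y) \<in> r" "x \<noteq> y" "(y, z) \<in> r" "y \<noteq> z" by blast
    from Rx[OF a(1)] obtain i j where ij: "x = i+1" "y = j+1" "i<n" "j<n" "M $$ (i,j) = 1" by blast
    from Rx[OF a(3)] obtain j' k where jk: "y = j'+1" "z = k+1" "j'<n" "k<n" "M $$ (j',k) = 1" by blast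
    have "j' = j" using ij jk by simp
    have "i < j" using NLi[of i j] ij a by auto
    moreover have "j < k" using NLi[of j k] jk \<open>j' = j\<close> a by auto
    ultimately have "\<exists>i j k. i < j \<and> j < k \<and> k < n \<and> M $$ (i, j) = 1 \<and> M $$ (j, k) = 1"
      using ij jk \<open>j' = j\<close> by blast
    with m0 show False by (rule notE)
  qed
  have tt: "two_plus_two_free r"
    unfolding two_plus_two_free_def
  proof
    assume "\<exists>i j k l. distinct [i, j, k, l] \<and>
      strictly_below r i j \<and> strictly_below r k l \<and>
      incomparable r i k \<and> incomparable r i l \<and>
      incomparable r j k \<and> incomparable r j l"
    then obtain w x y z where h: "distinct [w, x, y, z]"
      "(w,x) \<in> r" "(y,z) \<in> r"
      "incomparable r w y" "incomparable r w z" "incomparable r x y" "incomparable r x z"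
      unfolding strictly_below_def by blast
    from Rx[OF h(2)] Rx[OF h(3)] obtain a b c d where
        e: "w = a+1" "x = b+1" "y = c+1" "z = d+1" "a<n" "b<n" "c<n" "d<n" "M $$ (a,b) = 1" "M $$ (c,d) = 1" by auto
    have o: "a < b" "c < d" using NLi e h(1) by auto
    have N: "\<And>i j. i < n \<Longrightarrow> j < n \<Longrightarrow> (i+1,j+1) \<notin> r \<Longrightarrow> M $$ (i,j) = 0"
      using R Z by blast
    have "(w,y) \<notin> r" "(y,w) \<notin> r" "(w,z) \<notin> r" "(z,w) \<notin> r"
      "(x,y) \<notin> r" "(y,x) \<notin> r" "(x,z) \<notin> r" "(z,x) \<notin> r"
      using h(4-7) unfolding incomparable_def by auto
    then have z: "M $$ (a,c) = 0" "M $$ (c,a) = 0" "M $$ (a,d) = 0" "M $$ (d,a) = 0"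
      "M $$ (b,c) = 0" "M $$ (c,b) = 0" "M $$ (b,d) = 0" "M $$ (d,b) = 0"
      using N e(1-8) by auto
    have "distinct [a,b,c,d]" using h(1) e by auto
    moreover have m1': "\<And>a b c d. a < b \<Longrightarrow> b < c \<Longrightarrow> c < d \<Longrightarrow> d < n \<Longrightarrow>
          M $$ (a, b) = 1 \<Longrightarrow> M $$ (a, c) = 0 \<Longrightarrow> M $$ (a, d) = 0 \<Longrightarrow>
          M $$ (b, c) = 0 \<Longrightarrow> M $$ (b, d) = 0 \<Longrightarrow> M $$ (c, d) = 1 \<Longrightarrow> False"
      using m1 by blast
    moreover have m2': "\<And>a b c d. a < b \<Longrightarrow> b < c \<Longrightarrow> c < d \<Longrightarrow> d < n \<Longrightarrow>
          M $$ (a, b) = 0 \<Longrightarrow> M $$ (a, c) = 1 \<Longrightarrow> M $$ (a, d) = 0 \<Longrightarrow>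
          M $$ (b, c) = 0 \<Longrightarrow> M $$ (b, d) = 1 \<Longrightarrow> M $$ (c, d) = 0 \<Longrightarrow> False"
      using m2 by blast
    moreover have m3': "\<And>a b c d. a < b \<Longrightarrow> b < c \<Longrightarrow> c < d \<Longrightarrow> d < n \<Longrightarrow>
          M $$ (a, b) = 0 \<Longrightarrow> M $$ (a, c) = 0 \<Longrightarrow> M $$ (a, d) = 1 \<Longrightarrow>
          M $$ (b, c) = 1 \<Longrightarrow> M $$ (b, d) = 0 \<Longrightarrow> M $$ (c, d) = 0 \<Longrightarrow> False"
      using m3 by blast
    ultimately show False using two_two_aux[of n M a b c d] o e(6,8,9,10) z by blast
  qed
  have rin: "r \<in> nl_32_free_posets n"
    unfolding nl_32_free_posets_def partial_order_on_def preorder_on_def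
    using Rs refl trans antisym nl tf tt by blast
  have "incidence_matrix n r = M"
  proof (rule eq_matI)
    fix i j assume "i < dim_row M" "j < dim_col M"
    then have "i < n" "j < n" using car by auto
    then show "incidence_matrix n r $$ (i, j) = M $$ (i, j)"
      using R Z im_entry by (metis (full_types))
  qed (use car in \<open>auto simp: incidence_matrix_def\<close>)
  then show ?thesis using rin by blast
qed

theorem proposition6:
  fixes n :: nat
  shows "bij_betw (incidence_matrix n) (nl_32_free_posets n) (good_matrices n)"
  unfolding bij_betw_def using inj image_sub surj by blast

end
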